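(* For $d\ge 4$ and $\ell\ge 3$, the subKautz digraph $sK(d,\ell)$ has diameter $2\ell-1$.
   Context: The subKautz digraph $sK(d,\ell)$ ($d,\ell\ge2$) has vertex set $\{x_1\ldots x_\ell\in\mathbb Z_{d+1}^\ell : x_i\neq x_{i+1},\ i=1,\ldots,\ell-1\}$ and arcs $x_1\ldots x_\ell\to x_2\ldots x_\ell x_{\ell+1}$ for every $x_{\ell+1}\in\mathbb Z_{d+1}$ with $x_{\ell+1}\neq x_1,x_\ell$. The diameter is the maximum directed distance between ordered pairs of vertices. *)

theory Defs
  imports Main "HOL-Library.Extended_Nat"
begin

definition sK_vertices :: "nat \<Rightarrow> nat \<Rightarrow> nat list set" where
  "sK_vertices d l = {xs. length xs = l \<and> (\<forall>i<l. xs ! i < d + 1)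
                        \<and> (\<forall>i. i + 1 < l \<longrightarrow> xs ! i \<noteq> xs ! (i + 1))}"

definition sK_arcs :: "nat \<Rightarrow> nat \<Rightarrow> (nat list \<times> nat list) set" where
  "sK_arcs d l = {(u, v). u \<in> sK_vertices d l \<and>
      (\<exists>y. y < d + 1 \<and> y \<noteq> hd u \<and> y \<noteq> last u \<and> v = tl u @ [y])}"

text \<open>Directed distance: length of a shortest directed walk (\<infinity> if none).\<close>
definition sK_dist :: "nat \<Rightarrow> nat \<Rightarrow> nat list \<Rightarrow> nat list \<Rightarrow> enat" where
  "sK_dist d l u v = (INF k \<in> {k. (u, v) \<in> (sK_arcs d l) ^^ k}. enat k)"

definition sK_diameter :: "nat \<Rightarrow> nat \<Rightarrow> enat" where
  "sK_diameter d l = (SUP p \<in> sK_vertices d l \<times> sK_vertices d l. sK_dist d l (fst p) (snd p))"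

end

theory Submission
  imports Defs
begin


lemma walk_of_fun:
  assumes u: "u \<in> sK_vertices d l" and l1: "l \<ge> 1"
    and zu: "\<forall>i<l. z i = u!i"
    and zb: "\<forall>i<l+k. z i < d+1"
    and za: "\<forall>i. i+1 < l+k \<longrightarrow> z i \<noteq> z (Suc i)"
    and zc: "\<forall>i. l \<le> i \<and> i < l+k \<longrightarrow> z i \<noteq> z (i-l)"
  shows "(u, map z [k..<k+l]) \<in> sK_arcs d l ^^ k"
  using zb za zc
proof (induction k)
  case 0
  have "map z [0..<l] = u"
    using u zu by (intro nth_equalityI) (auto simp: sK_vertices_def)
  then show ?case by simp
next
  case (Suc k)
  have IH: "(u, map z [k..<k+l]) \<in> sK_arcs d l ^^ k"
    using Suc.IH Suc.prems by auto
  let ?w = "map z [k..<k+l]"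
  have wV: "?w \<in> sK_vertices d l"
    using Suc.prems unfolding sK_vertices_def
    by (auto simp: add.commute)
  have e1: "?w = z k # map z [Suc k..<k+l]" using l1 by (simp add: upt_conv_Cons)
  have hdw: "hd ?w = z k" using e1 by simp
  have lastw: "last ?w = z (k+l-1)" using l1 by (simp add: last_map)
  have tlw: "tl ?w @ [z (k+l)] = map z [Suc k..<Suc k+l]"
    using e1 l1 by simp
  have "z (k+l) < d+1" using Suc.prems by auto
  moreover have "z (k+l) \<noteq> z k" using Suc.prems(3)[rule_format, of "k+l"] l1 by auto
  moreover have "z (k+l) \<noteq> z (k+l-1)" using Suc.prems(2)[rule_format, of "k+l-1"] l1 by auto
  ultimately have ex: "\<exists>y. y < d + 1 \<and> y \<noteq> hd ?w \<and> y \<noteq> last ?w \<and> map z [Suc k..<Suc k+l] = tl ?w @ [y]"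
    using hdw lastw tlw by (intro exI[of _ "z (k+l)"]) simp
  have "(?w, map z [Suc k..<Suc k+l]) \<in> sK_arcs d l"
    unfolding sK_arcs_def using wV ex by blast
  then show ?case using IH by auto
qed

lemma fun_of_walk:
  assumes "(u,v) \<in> sK_arcs d l ^^ k" and u: "u \<in> sK_vertices d l" and l1: "l \<ge> 1"
  shows "\<exists>z. (\<forall>i<l. z i = u!i) \<and> v = map z [k..<k+l] \<and> (\<forall>i. l \<le> i \<and> i < l+k \<longrightarrow> z i \<noteq> z (i-l))"
  using assms(1)
proof (induction k arbitrary: v)
  case 0
  then have "u = v" by simp
  moreover have "map (\<lambda>i. u!i) [0..<l] = u"
    using u by (intro nth_equalityI) (auto simp: sK_vertices_def)
  ultimately show ?case by (intro exI[of _ "\<lambda>i. u!i"]) auto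
next
  case (Suc k)
  then obtain w where uw: "(u,w) \<in> sK_arcs d l ^^ k" and wv: "(w,v) \<in> sK_arcs d l" by auto
  from Suc.IH[OF uw] obtain z where z1: "\<forall>i<l. z i = u!i" and z2: "w = map z [k..<k+l]"
    and z3: "\<forall>i. l \<le> i \<and> i < l+k \<longrightarrow> z i \<noteq> z (i-l)" by blast
  from wv obtain y where y: "y \<noteq> hd w" "v = tl w @ [y]" unfolding sK_arcs_def by auto
  define z' where "z' = z(k+l := y)"
  have e1: "w = z k # map z [Suc k..<k+l]" using l1 z2 by (simp add: upt_conv_Cons)
  have "map z' [Suc k..<k+l] = map z [Suc k..<k+l]" unfolding z'_def by (intro map_cong) auto
  then have "v = map z' [Suc k..<Suc k+l]" using y e1 l1 by (simp add: z'_def)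
  moreover have "\<forall>i<l. z' i = u!i" using z1 by (auto simp: z'_def)
  moreover have "\<forall>i. l \<le> i \<and> i < l+Suc k \<longrightarrow> z' i \<noteq> z' (i-l)"
  proof (intro allI impI)
    fix i assume i: "l \<le> i \<and> i < l + Suc k"
    show "z' i \<noteq> z' (i-l)"
    proof (cases "i = k+l")
      case True then show ?thesis using y(1) e1 l1 by (simp add: z'_def)
    next
      case False
      moreover have "i - l \<noteq> k + l" using i l1 by arith
      ultimately show ?thesis using z3 i l1 by (simp add: z'_def)
    qed
  qed
  ultimately show ?case by blast
qed



definition pick :: "nat set \<Rightarrow> nat" where "pick S = (LEAST c. c \<notin> S)"

lemma pick_prop:
  assumes "card S \<le> 4" "finite S"
  shows "pick S \<notin> S \<and> pick S \<le> 4"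
proof -
  have "\<not> {0..4::nat} \<subseteq> S"
  proof
    assume "{0..4::nat} \<subseteq> S"
    then have "card {0..4::nat} \<le> card S" using assms(2) by (rule card_mono[rotated])
    then show False using assms(1) by simp
  qed
  then obtain c0 where c0: "c0 \<in> {0..4::nat}" "c0 \<notin> S" by blast
  then have c: "c0 \<le> 4" "c0 \<notin> S" by auto
  show ?thesis unfolding pick_def
    using LeastI[of "\<lambda>c. c \<notin> S" c0] Least_le[of "\<lambda>c. c \<notin> S" c0] c by auto
qed

lemma card4: "card {a,b,c,e::nat} \<le> 4"
proof -
  have "card {a,b,c,e} \<le> Suc (card {b,c,e})" by (rule card_insert_le_m1) auto
  also have "card {b,c,e} \<le> Suc (card {c,e})" by (rule card_insert_le_m1) auto
  also have "card {c,e} \<le> 2" by (simp add: card_insert_if)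
  finally show ?thesis by simp
qed

lemma pick4: "pick {a,b,c,e} \<notin> {a,b,c,e} \<and> pick {a,b,c,e} \<le> 4"
  by (rule pick_prop[OF card4]) simp



fun wseq :: "nat list \<Rightarrow> nat list \<Rightarrow> nat \<Rightarrow> nat \<Rightarrow> nat \<Rightarrow> nat" where
  "wseq u v l s 0 = pick {u!0, u!(l-1), v!s, v!0}"
| "wseq u v l s (Suc j) = pick {u!Suc j, wseq u v l s j, v!(Suc j + s), v!0}"

lemma wseq_props:
  "wseq u v l s j \<le> 4" "wseq u v l s j \<noteq> u!j" "wseq u v l s j \<noteq> v!(j+s)"
  "wseq u v l s j \<noteq> v!0" "wseq u v l s 0 \<noteq> u!(l-1)" "wseq u v l s (Suc j) \<noteq> wseq u v l s j"
  using pick4[of "u!0" "u!(l-1)" "v!s" "v!0"] pick4[of "u!j" "wseq u v l s (j-1)" "v!(j+s)" "v!0"]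
    pick4[of "u!Suc j" "wseq u v l s j" "v!(Suc j + s)" "v!0"]
  by (cases j; auto)+

lemma upper:
  assumes u: "u \<in> sK_vertices d l" and v: "v \<in> sK_vertices d l" and d: "d \<ge> 4"
    and m1: "1 \<le> m" and ml: "m < l"
    and uv: "\<forall>j. j < l - m \<longrightarrow> v!j \<noteq> u!(m+j)"
  shows "(u, v) \<in> sK_arcs d l ^^ (m+l)"
proof -
  define s where "s = l - m"
  define w where "w = wseq u v l s"
  define z where "z = (\<lambda>i. if i < l then u!i else if i < l+m then w (i-l) else v!(i-l-m))"
  have ul: "length u = l" and ub: "\<forall>i<l. u!i < d+1" and ua: "\<forall>i. i+1<l \<longrightarrow> u!i \<noteq> u!(i+1)"
    using u by (auto simp: sK_vertices_def)
  have vl: "length v = l" and vb: "\<forall>i<l. v!i < d+1" and va: "\<forall>i. i+1<l \<longrightarrow> v!i \<noteq> v!(i+1)"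
    using v by (auto simp: sK_vertices_def)
  have wp: "\<And>j. w j \<le> 4" "\<And>j. w j \<noteq> u!j" "\<And>j. w j \<noteq> v!(j+s)" "\<And>j. w j \<noteq> v!0"
    "w 0 \<noteq> u!(l-1)" "\<And>j. w (Suc j) \<noteq> w j"
    unfolding w_def using wseq_props by auto
  have zu: "\<forall>i<l. z i = u!i" by (simp add: z_def)
  have zb: "\<forall>i<l+(m+l). z i < d+1"
  proof (intro allI impI)
    fix i assume "i < l+(m+l)"
    then show "z i < d+1" using ub vb wp(1)[of "i-l"] d by (auto simp: z_def)
  qed
  have za: "\<forall>i. i+1 < l+(m+l) \<longrightarrow> z i \<noteq> z (Suc i)"
  proof (intro allI impI)
    fix i assume i: "i+1 < l+(m+l)"
    consider "Suc i < l" | "i = l-1" | "l \<le> i \<and> Suc i < l+m" | "i = l+m-1" | "l+m \<le> i"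
      using m1 ml by linarith
    then show "z i \<noteq> z (Suc i)"
    proof cases
      case 1 then show ?thesis using ua by (auto simp: z_def)
    next
      case 2 then show ?thesis using wp(5) m1 ml by (auto simp: z_def)
    next
      case 3
      then have "Suc i - l = Suc (i - l)" by arith
      then show ?thesis using 3 wp(6)[of "i-l"] by (auto simp: z_def)
    next
      case 4
      then have "m - 1 = i - l" "Suc i - l - m = 0" using m1 ml by arith+
      then show ?thesis using 4 wp(4)[of "i-l"] m1 ml by (auto simp: z_def)
    next
      case 5
      then have "Suc i - l - m = Suc (i - l - m)" by arith
      then show ?thesis using 5 i va[rule_format, of "i-l-m"] by (auto simp: z_def)
    qed
  qed
  have zc: "\<forall>i. l \<le> i \<and> i < l+(m+l) \<longrightarrow> z i \<noteq> z (i-l)"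
  proof (intro allI impI)
    fix i assume i: "l \<le> i \<and> i < l+(m+l)"
    show "z i \<noteq> z (i-l)"
    proof (cases "i < l+m")
      case True
      then show ?thesis using i wp(2)[of "i-l"] ml by (auto simp: z_def)
    next
      case False
      define j where "j = i-l-m"
      have j: "j < l" "i - l = m + j" "i = l + m + j" using i False by (auto simp: j_def)
      show ?thesis
      proof (cases "m + j < l")
        case True
        then show ?thesis using j uv[rule_format, of j] by (auto simp: z_def)
      next
        case False
        have "m + j - l + s = j" using False ml j by (simp add: s_def)
        then show ?thesis using j False wp(3)[of "m+j-l"] ml by (auto simp: z_def)
      qed
    qed
  qed
  have "(u, map z [m+l..<m+l+l]) \<in> sK_arcs d l ^^ (m+l)"
    by (rule walk_of_fun[OF u _ zu zb za zc]) (use ml in auto)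
  moreover have "map z [m+l..<m+l+l] = v"
    using vl by (intro nth_equalityI) (auto simp: z_def)
  ultimately show ?thesis by simp
qed



definition uL :: "nat \<Rightarrow> nat list" where "uL l = map (\<lambda>i. (l-1-i) mod 2) [0..<l]"
definition vL :: "nat \<Rightarrow> nat list" where
  "vL l = map (\<lambda>j. if j=0 then 1 else if j=1 then 2 else j mod 2) [0..<l]"

lemma map_V: "(\<forall>i<l. f i < d+1) \<Longrightarrow> (\<forall>i. i+1<l \<longrightarrow> f i \<noteq> f (i+1)) \<Longrightarrow> map f [0..<l] \<in> sK_vertices d l"
  by (simp add: sK_vertices_def)

lemma uL_V: assumes d: "d \<ge> 2" shows "uL l \<in> sK_vertices d l"
  unfolding uL_def
proof (rule map_V)
  show "\<forall>i<l. (l-1-i) mod 2 < d+1" using d by auto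
  show "\<forall>i. i + 1 < l \<longrightarrow> (l-1-i) mod 2 \<noteq> (l-1-(i+1)) mod 2"
  proof (intro allI impI)
    fix i assume i: "i + 1 < l"
    then have "l-1-i = Suc (l-1-(i+1))" by arith
    then show "(l-1-i) mod 2 \<noteq> (l-1-(i+1)) mod 2" by (simp add: mod_Suc)
  qed
qed

lemma vL_V: assumes d: "d \<ge> 2" shows "vL l \<in> sK_vertices d l"
proof -
  define f where "f = (\<lambda>j::nat. if j=0 then 1 else if j=1 then 2 else j mod (2::nat))"
  have fa: "\<And>i. f i \<noteq> f (Suc i)"
  proof -
    fix i show "f i \<noteq> f (Suc i)"
      by (cases "i = 0"; cases "i = 1"; simp add: f_def mod_Suc)
  qed
  have fb: "\<And>i. f i < 3"
  proof -
    fix i have "i mod 2 < (2::nat)" by simp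
    then show "f i < 3" unfolding f_def by (auto intro: less_trans)
  qed
  have "vL l = map f [0..<l]" by (simp add: vL_def f_def)
  moreover have "map f [0..<l] \<in> sK_vertices d l"
  proof (rule map_V)
    show "\<forall>i<l. f i < d+1"
    proof (intro allI impI)
      fix i show "f i < d+1" using fb[of i] d by linarith
    qed
    show "\<forall>i. i + 1 < l \<longrightarrow> f i \<noteq> f (i+1)" using fa by simp
  qed
  ultimately show ?thesis by simp
qed

lemma lower:
  assumes d: "d \<ge> 2" and l: "l \<ge> 3" and k: "k \<le> 2*l-2"
  shows "(uL l, vL l) \<notin> sK_arcs d l ^^ k"
proof
  assume "(uL l, vL l) \<in> sK_arcs d l ^^ k"
  from fun_of_walk[OF this uL_V[OF d]] l obtain z where
    zu: "\<forall>i<l. z i = uL l!i" and zv: "vL l = map z [k..<k+l]"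
    and zc: "\<forall>i. l \<le> i \<and> i < l+k \<longrightarrow> z i \<noteq> z (i-l)" by auto
  have zv': "\<And>j. j < l \<Longrightarrow> z (k+j) = vL l ! j"
    using zv by (simp add: nth_map_upt) 
  have uLn: "\<And>i. i < l \<Longrightarrow> uL l ! i = (l-1-i) mod 2" by (simp add: uL_def)
  have vLn: "\<And>j. j < l \<Longrightarrow> vL l ! j = (if j=0 then 1 else if j=1 then 2 else j mod 2)"
    by (simp add: vL_def)
  show False
  proof (cases "k < l")
    case True
    show False
    proof (cases "k \<le> l-2")
      case True
      have "z (k+1) = 2" using zv'[of 1] vLn[of 1] l by simp
      moreover have "z (k+1) = (l-1-(k+1)) mod 2" using zu uLn[of "k+1"] True l by auto
      moreover have "(l-1-(k+1)) mod 2 < (2::nat)" by (rule mod_less_divisor) simp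
      ultimately show False by simp
    next
      case False
      then have "k = l-1" using \<open>k<l\<close> by arith
      have "z k = 1" using zv'[of 0] vLn[of 0] l by simp
      moreover have "z k = 0" using zu uLn[of k] \<open>k = l-1\<close> l by auto
      ultimately show False by simp
    qed
  next
    case False
    define m where "m = k - l"
    have m: "m \<le> l-2" "k = l + m" using False k l by (auto simp: m_def)
    show False
    proof (cases "odd (l-1-m)")
      case True
      have "z k = 1" using zv'[of 0] vLn[of 0] l by simp
      moreover have "z (k-l) = 1"
      proof -
        have "m < l" using m l by arith
        then have "z (k-l) = (l-1-m) mod 2" using zu uLn[of m] m by simp
        also have "\<dots> = 1" by (rule odd_iff_mod_2_eq_one[THEN iffD1, OF True])
        finally show ?thesis .
      qed
      moreover have "z k \<noteq> z (k-l)" using zc[rule_format, of k] m l by auto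
      ultimately show False by simp
    next
      case False
      have zk2: "z (k+2) = 0" using zv'[of 2] vLn[of 2] l by simp
      from False have ev: "even (l-1-m)" by blast
      then obtain t where t: "l-1-m = 2*t" by (rule evenE)
      have "t \<noteq> 0" using t m l by auto
      then have "m + 2 < l" using t m l by arith
      moreover have "l - 1 - (m+2) = 2*(t-1)" using t \<open>t \<noteq> 0\<close> by arith
      ultimately have "z (m+2) = 0" using zu uLn[of "m+2"] by simp
      moreover have "z (k+2) \<noteq> z (k+2-l)" using zc[rule_format, of "k+2"] m l by auto
      moreover have "k + 2 - l = m + 2" using m by arith
      ultimately show False using zk2 by simp
    qed
  qed
qed

theorem corollary0:
  fixes d l :: nat
  assumes "d \<ge> 4" and "l \<ge> 3"
  shows "sK_diameter d l = enat (2 * l - 1)"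
proof (rule antisym)
  show "sK_diameter d l \<le> enat (2 * l - 1)"
    unfolding sK_diameter_def
  proof (rule SUP_least)
    fix p assume p: "p \<in> sK_vertices d l \<times> sK_vertices d l"
    obtain u v where uv: "p = (u,v)" by (cases p)
    have u: "u \<in> sK_vertices d l" and v: "v \<in> sK_vertices d l" using p uv by auto
    have "u!(l-2) \<noteq> u!(l-2+1)" using u assms(2) unfolding sK_vertices_def by auto
    moreover have "l-2+1 = l-1" using assms(2) by arith
    ultimately have ua: "u!(l-2) \<noteq> u!(l-1)" by simp
    have va: "v!0 \<noteq> v!1" using v assms(2) unfolding sK_vertices_def by auto
    obtain k where k: "(u,v) \<in> sK_arcs d l ^^ k" "k \<le> 2*l-1"
    proof (cases "v!0 = u!(l-1)")
      case False
      have "(u,v) \<in> sK_arcs d l ^^ ((l-1)+l)"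
        by (rule upper[OF u v assms(1)]) (use assms False in auto)
      then show ?thesis using that[of "(l-1)+l"] assms by auto
    next
      case True
      have "\<forall>j. j < l - (l-2) \<longrightarrow> v!j \<noteq> u!((l-2)+j)"
      proof (intro allI impI)
        fix j assume "j < l - (l-2)"
        then have "j = 0 \<or> j = 1" using assms by arith
        moreover have "l - 2 + 1 = l - 1" using assms by arith
        ultimately show "v!j \<noteq> u!((l-2)+j)" using True ua va by auto
      qed
      then have "(u,v) \<in> sK_arcs d l ^^ ((l-2)+l)"
        by (intro upper[OF u v assms(1)]) (use assms in auto)
      then show ?thesis using that[of "(l-2)+l"] assms by auto
    qed
    have "sK_dist d l u v \<le> enat k"
      unfolding sK_dist_def by (rule INF_lower) (use k in auto)
    also have "enat k \<le> enat (2 * l - 1)" using k by simp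
    finally show "sK_dist d l (fst p) (snd p) \<le> enat (2 * l - 1)" using uv by simp
  qed
next
  have d2: "d \<ge> 2" using assms by auto
  have "enat (2 * l - 1) \<le> sK_dist d l (uL l) (vL l)"
    unfolding sK_dist_def
  proof (rule INF_greatest)
    fix k assume "k \<in> {k. (uL l, vL l) \<in> sK_arcs d l ^^ k}"
    then have "\<not> k \<le> 2*l-2" using lower[OF d2 assms(2)] by auto
    then show "enat (2 * l - 1) \<le> enat k" by simp
  qed
  also have "\<dots> \<le> sK_diameter d l"
    unfolding sK_diameter_def
    by (rule SUP_upper2[where i="(uL l, vL l)"]) (use uL_V[OF d2] vL_V[OF d2] in auto)
  finally show "enat (2 * l - 1) \<le> sK_diameter d l" .
qed


end
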